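(* Let $G$ be a finite abelian group, $M$ a $\hat G$-linear, left inductive monoid, and $e$ a non-zero idempotent of $M$ with $\mathcal J$-class $J=\mathcal J_e$. Then there exists a positive integer $d$ such that $P(e)e\cong\hat G_J^{\oplus d}$ as right $\hat G$-linear $\hat G_J$-representations.
   Context: $\hat G=G\sqcup\{0\}$ with $0$ absorbing. $\mathrm{Vect}_{\hat G}$: objects are finite pointed sets with an action of $\hat G$ ($0v=0$, $g0=0$) such that $G$ acts freely on nonzero elements; morphisms $f$ satisfy $f(0)=0$, $f(gv)=gf(v)$, $f(v_1)=f(v_2)\neq0\Rightarrow Gv_1=Gv_2$; $\oplus$ is disjoint union with zeros identified. A $\hat G$-linear monoid is a finite monoid $M$ with absorbing element $0_M$ containing $G$ as a subgroup of units commuting with all of $M$, with $G$ acting freely by translation on $M\setminus\{0_M\}$. For $a\in M$, $J(a)=MaM$, $\mathcal J_a$ its $\mathcal J$-class ($a\sim b\iff J(a)=J(b)$), $I(a)=\{x\in J(a):MxM\neq J(a)\}$, $P(a)=(J(a)\setminus I(a))\cup\{0\}$ with product $xy$ if $xy\in J(a)\setminus I(a)$, else $0$. $M$ is left inductive if for every idempotent $e$, left translation by each $m\in M$ on $P(e)$ ($m\cdot x=mx$ if in $J(e)\setminus I(e)$, else $0$) makes $P(e)$ an $M$-representation by morphisms of $\mathrm{Vect}_{\hat G}$ with $0_M$ acting as zero and $g\in G$ as the scalar $g$. $G_J=eMe\cap J$ is a group with identity $e$, $\hat G_J=G_J\sqcup\{0\}$. $P(e)e=\{xe: x\in P(e)\}$,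 on which $\hat G_J$ acts on the right by multiplication in $P(e)$ and $G$ acts by scalars; $\hat G_J$ itself is a right $\hat G_J$-representation by right translation, and $\hat G_J^{\oplus d}$ is the direct sum of $d$ copies. *)

theory Defs
  imports Main
begin

definition hat_linear_monoid ::
  "'m set \<Rightarrow> ('m \<Rightarrow> 'm \<Rightarrow> 'm) \<Rightarrow> 'm \<Rightarrow> 'm \<Rightarrow> 'm set \<Rightarrow> bool" where
  "hat_linear_monoid M mult one zero G \<longleftrightarrow>
     finite M \<and> one \<in> M \<and> zero \<in> M \<and>
     (\<forall>x\<in>M. \<forall>y\<in>M. mult x y \<in> M) \<and>
     (\<forall>x\<in>M. \<forall>y\<in>M. \<forall>z\<in>M. mult (mult x y) z = mult x (mult y z)) \<and>
     (\<forall>x\<in>M. mult one x = x \<and> mult x one = x) \<and>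
     (\<forall>x\<in>M. mult zero x = zero \<and> mult x zero = zero) \<and>
     G \<subseteq> M \<and> one \<in> G \<and>
     (\<forall>g\<in>G. \<forall>h\<in>G. mult g h \<in> G) \<and>
     (\<forall>g\<in>G. \<exists>h\<in>G. mult g h = one \<and> mult h g = one) \<and>
     (\<forall>g\<in>G. \<forall>x\<in>M. mult g x = mult x g) \<and>
     (\<forall>g\<in>G. \<forall>x\<in>M - {zero}. mult g x = x \<longrightarrow> g = one)"

(* Objects of Vect_{\hat G}: finite pointed sets with G-action fixing the point,
   free on non-zero elements. *)
definition vect_obj ::
  "'g set \<Rightarrow> ('g \<Rightarrow> 'g \<Rightarrow> 'g) \<Rightarrow> 'g \<Rightarrow> 'v set \<Rightarrow> 'v \<Rightarrow> ('g \<Rightarrow> 'v \<Rightarrow> 'v) \<Rightarrow> bool" where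
  "vect_obj G gmult gone V z act \<longleftrightarrow>
     finite V \<and> z \<in> V \<and>
     (\<forall>g\<in>G. \<forall>v\<in>V. act g v \<in> V) \<and>
     (\<forall>g\<in>G. act g z = z) \<and>
     (\<forall>v\<in>V. act gone v = v) \<and>
     (\<forall>g\<in>G. \<forall>h\<in>G. \<forall>v\<in>V. act (gmult g h) v = act g (act h v)) \<and>
     (\<forall>g\<in>G. \<forall>v\<in>V - {z}. act g v = v \<longrightarrow> g = gone)"

definition vect_morphism ::
  "'g set \<Rightarrow> 'v set \<Rightarrow> 'v \<Rightarrow> ('g \<Rightarrow> 'v \<Rightarrow> 'v) \<Rightarrow>
   'w set \<Rightarrow> 'w \<Rightarrow> ('g \<Rightarrow> 'w \<Rightarrow> 'w) \<Rightarrow> ('v \<Rightarrow> 'w) \<Rightarrow> bool" where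
  "vect_morphism G V z1 act1 W z2 act2 f \<longleftrightarrow>
     (\<forall>v\<in>V. f v \<in> W) \<and> f z1 = z2 \<and>
     (\<forall>g\<in>G. \<forall>v\<in>V. f (act1 g v) = act2 g (f v)) \<and>
     (\<forall>v1\<in>V. \<forall>v2\<in>V. f v1 = f v2 \<and> f v1 \<noteq> z2 \<longrightarrow>
         (\<lambda>g. act1 g v1) ` G = (\<lambda>g. act1 g v2) ` G)"

definition Jideal :: "'m set \<Rightarrow> ('m \<Rightarrow> 'm \<Rightarrow> 'm) \<Rightarrow> 'm \<Rightarrow> 'm set" where
  "Jideal M mult a = {mult (mult x a) y | x y. x \<in> M \<and> y \<in> M}"

definition Jclass :: "'m set \<Rightarrow> ('m \<Rightarrow> 'm \<Rightarrow> 'm) \<Rightarrow> 'm \<Rightarrow> 'm set" where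
  "Jclass M mult a = {b \<in> M. Jideal M mult b = Jideal M mult a}"

definition Iset :: "'m set \<Rightarrow> ('m \<Rightarrow> 'm \<Rightarrow> 'm) \<Rightarrow> 'm \<Rightarrow> 'm set" where
  "Iset M mult a = {x \<in> Jideal M mult a. Jideal M mult x \<noteq> Jideal M mult a}"

definition Pset :: "'m set \<Rightarrow> ('m \<Rightarrow> 'm \<Rightarrow> 'm) \<Rightarrow> 'm \<Rightarrow> 'm \<Rightarrow> 'm set" where
  "Pset M mult zero a = (Jideal M mult a - Iset M mult a) \<union> {zero}"

(* product in P(a) (also used for left translation by elements of M) *)
definition Pmult :: "'m set \<Rightarrow> ('m \<Rightarrow> 'm \<Rightarrow> 'm) \<Rightarrow> 'm \<Rightarrow> 'm \<Rightarrow> 'm \<Rightarrow> 'm \<Rightarrow> 'm" where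
  "Pmult M mult zero a x y =
     (if mult x y \<in> Jideal M mult a - Iset M mult a then mult x y else zero)"

definition left_inductive ::
  "'m set \<Rightarrow> ('m \<Rightarrow> 'm \<Rightarrow> 'm) \<Rightarrow> 'm \<Rightarrow> 'm \<Rightarrow> 'm set \<Rightarrow> bool" where
  "left_inductive M mult one zero G \<longleftrightarrow>
     (\<forall>e\<in>M. mult e e = e \<longrightarrow>
        (let P = Pset M mult zero e; act = Pmult M mult zero e in
          vect_obj G mult one P zero act \<and>
          (\<forall>m\<in>M. vect_morphism G P zero act P zero act (act m)) \<and>
          (\<forall>m\<in>M. \<forall>n\<in>M. \<forall>x\<in>P. act (mult m n) x = act m (act n x)) \<and>
          (\<forall>x\<in>P. act one x = x) \<and>
          (\<forall>x\<in>P. act zero x = zero) \<and>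
          (\<forall>g\<in>G. \<forall>x\<in>P. act g x = mult g x)))"

definition GJ :: "'m set \<Rightarrow> ('m \<Rightarrow> 'm \<Rightarrow> 'm) \<Rightarrow> 'm \<Rightarrow> 'm set" where
  "GJ M mult e = {mult (mult e m) e | m. m \<in> M} \<inter> Jclass M mult e"

definition hatGJ :: "'m set \<Rightarrow> ('m \<Rightarrow> 'm \<Rightarrow> 'm) \<Rightarrow> 'm \<Rightarrow> 'm \<Rightarrow> 'm set" where
  "hatGJ M mult zero e = GJ M mult e \<union> {zero}"

definition PeE :: "'m set \<Rightarrow> ('m \<Rightarrow> 'm \<Rightarrow> 'm) \<Rightarrow> 'm \<Rightarrow> 'm \<Rightarrow> 'm set" where
  "PeE M mult zero e = (\<lambda>x. Pmult M mult zero e x e) ` Pset M mult zero e"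

(* hatG_J^d: None is the zero, Some (h, i) is h in the i-th copy (i < d) *)
definition Dsum :: "'m set \<Rightarrow> ('m \<Rightarrow> 'm \<Rightarrow> 'm) \<Rightarrow> 'm \<Rightarrow> nat \<Rightarrow> ('m \<times> nat) option set" where
  "Dsum M mult e d = {None} \<union> Some ` (GJ M mult e \<times> {..<d})"

definition Dsum_ract ::
  "'m set \<Rightarrow> ('m \<Rightarrow> 'm \<Rightarrow> 'm) \<Rightarrow> 'm \<Rightarrow> 'm \<Rightarrow> ('m \<times> nat) option \<Rightarrow> 'm \<Rightarrow> ('m \<times> nat) option" where
  "Dsum_ract M mult zero e v h =
     (case v of None \<Rightarrow> None
      | Some (y, i) \<Rightarrow> (let p = Pmult M mult zero e y h in
                         if p = zero then None else Some (p, i)))"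

definition Dsum_act ::
  "('m \<Rightarrow> 'm \<Rightarrow> 'm) \<Rightarrow> 'm \<Rightarrow> ('m \<times> nat) option \<Rightarrow> ('m \<times> nat) option" where
  "Dsum_act mult g v = (case v of None \<Rightarrow> None | Some (y, i) \<Rightarrow> Some (mult g y, i))"

end

theory Submission
  imports Defs
begin

primrec pw :: "('m \<Rightarrow> 'm \<Rightarrow> 'm) \<Rightarrow> 'm \<Rightarrow> 'm \<Rightarrow> nat \<Rightarrow> 'm" where
  "pw f o1 s 0 = o1"
| "pw f o1 s (Suc n) = f (pw f o1 s n) s"

locale fmon =
  fixes M :: "'m set" and mult :: "'m \<Rightarrow> 'm \<Rightarrow> 'm" and one zero :: 'm
  assumes fin: "finite M" and one_M: "one \<in> M" and zero_M: "zero \<in> M"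
  and closed: "\<And>x y. x \<in> M \<Longrightarrow> y \<in> M \<Longrightarrow> mult x y \<in> M"
  and assoc: "\<And>x y z. x \<in> M \<Longrightarrow> y \<in> M \<Longrightarrow> z \<in> M \<Longrightarrow> mult (mult x y) z = mult x (mult y z)"
  and lone: "\<And>x. x \<in> M \<Longrightarrow> mult one x = x"
  and rone: "\<And>x. x \<in> M \<Longrightarrow> mult x one = x"
  and lzero: "\<And>x. x \<in> M \<Longrightarrow> mult zero x = zero"
  and rzero: "\<And>x. x \<in> M \<Longrightarrow> mult x zero = zero"
begin

lemma pw_M: "s \<in> M \<Longrightarrow> pw mult one s n \<in> M"
  by (induction n) (auto simp: one_M closed)

lemma pw_add: "s \<in> M \<Longrightarrow> pw mult one s (m + n) = mult (pw mult one s m) (pw mult one s n)"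
  by (induction n) (auto simp: rone pw_M assoc)

lemma pw_comm: "s \<in> M \<Longrightarrow> mult s (pw mult one s n) = pw mult one s (Suc n)"
proof -
  assume s: "s \<in> M"
  have "pw mult one s (Suc n) = pw mult one s (1 + n)" by simp
  also have "\<dots> = mult (pw mult one s 1) (pw mult one s n)" using pw_add[OF s] by blast
  finally show ?thesis using s by (simp add: lone)
qed

lemma idem: assumes s: "s \<in> M" shows "\<exists>k\<ge>1. mult (pw mult one s k) (pw mult one s k) = pw mult one s k"
proof -
  let ?p = "pw mult one s"
  have "range ?p \<subseteq> M" using pw_M[OF s] by auto
  hence "finite (range ?p)" using fin finite_subset by blast
  hence "\<not> inj ?p" using finite_imageD by blast
  then obtain i j where ij: "i \<noteq> j" "?p i = ?p j" unfolding inj_def by blast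
  then obtain i j where ij: "i < j" "?p i = ?p j"
    by (metis linorder_neqE_nat)
  define t where "t = j - i"
  have t1: "t \<ge> 1" using ij t_def by simp
  have per: "?p (m + t) = ?p m" if "m \<ge> i" for m
  proof -
    have "?p (m + t) = ?p ((m - i) + j)" using that ij t_def by (simp add: algebra_simps)
    also have "\<dots> = mult (?p (m - i)) (?p j)" using pw_add[OF s] by blast
    also have "\<dots> = mult (?p (m - i)) (?p i)" using ij by simp
    also have "\<dots> = ?p ((m - i) + i)" using pw_add[OF s] by metis
    finally show ?thesis using that by simp
  qed
  have perc: "?p (m + c * t) = ?p m" if "m \<ge> i" for m c
  proof (induction c)
    case (Suc c)
    have "?p (m + Suc c * t) = ?p ((m + c * t) + t)" by (simp add: algebra_simps)
    also have "\<dots> = ?p (m + c * t)" using per that by simp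
    finally show ?case using Suc by simp
  qed simp
  define k where "k = (i + 1) * t"
  have "(i+1)*1 \<le> (i+1)*t" by (rule mult_le_mono2[OF t1])
  hence "k \<ge> i" "k \<ge> 1" using k_def by simp_all
  hence "?p (k + k) = ?p k" using perc[of k "i+1"] k_def by simp
  thus ?thesis using pw_add[OF s, of k k] \<open>k \<ge> 1\<close> by auto
qed

abbreviation J where "J a \<equiv> Jideal M mult a"

lemma JI: "x \<in> M \<Longrightarrow> y \<in> M \<Longrightarrow> z = mult (mult x a) y \<Longrightarrow> z \<in> J a"
  unfolding Jideal_def by blast

lemma JE: "z \<in> J a \<Longrightarrow> \<exists>x y. x \<in> M \<and> y \<in> M \<and> z = mult (mult x a) y"
  unfolding Jideal_def by blast

lemma J_sub: "a \<in> M \<Longrightarrow> J a \<subseteq> M"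
proof
  fix z assume "a \<in> M" "z \<in> J a"
  then obtain x y where "x \<in> M" "y \<in> M" "z = mult (mult x a) y" using JE by blast
  thus "z \<in> M" using \<open>a \<in> M\<close> closed by simp
qed

lemma J_self: "a \<in> M \<Longrightarrow> a \<in> J a"
  by (rule JI[OF one_M one_M]) (simp add: lone rone)

lemma J_mulL: "a \<in> M \<Longrightarrow> x \<in> M \<Longrightarrow> mult x a \<in> J a"
  by (rule JI[of x one]) (simp_all add: rone closed one_M)

lemma J_mulR: "a \<in> M \<Longrightarrow> x \<in> M \<Longrightarrow> mult a x \<in> J a"
  by (rule JI[of one x]) (simp_all add: lone one_M)

lemma J_trans: assumes a: "a \<in> M" and b: "b \<in> J a" shows "J b \<subseteq> J a"
proof
  fix z assume "z \<in> J b"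
  then obtain p q where pq: "p \<in> M" "q \<in> M" "z = mult (mult p b) q" using JE by blast
  obtain x y where xy: "x \<in> M" "y \<in> M" "b = mult (mult x a) y" using b JE by blast
  have "z = mult (mult (mult p x) a) (mult y q)" using pq xy a by (simp add: assoc closed)
  thus "z \<in> J a" using pq xy closed JI by simp
qed

lemma stab: assumes a: "a \<in> M" and x: "x \<in> M" and eq: "J (mult x a) = J a"
  shows "\<exists>u\<in>M. mult u (mult x a) = a"
proof -
  have "a \<in> J (mult x a)" using eq J_self[OF a] by simp
  then obtain p q where pq: "p \<in> M" "q \<in> M" "a = mult (mult p (mult x a)) q" using JE by blast
  define r where "r = mult p x"
  have r: "r \<in> M" using r_def pq x closed by simp
  have a1: "a = mult (mult r a) q" using pq a x r_def by (simp add: assoc closed)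
  have an: "a = mult (mult (pw mult one r n) a) (pw mult one q n)" for n
  proof (induction n)
    case 0 then show ?case using a by (simp add: lone rone)
  next
    case (Suc n)
    have "a = mult (mult (pw mult one r n) (mult (mult r a) q)) (pw mult one q n)"
      using Suc a1 by simp
    also have "\<dots> = mult (mult (mult (pw mult one r n) r) a) (mult q (pw mult one q n))"
      using a r pq pw_M by (simp add: assoc closed)
    also have "\<dots> = mult (mult (pw mult one r (Suc n)) a) (pw mult one q (Suc n))"
      using pw_comm[OF pq(2)] by simp
    finally show ?case .
  qed
  obtain k where k: "k \<ge> 1" "mult (pw mult one r k) (pw mult one r k) = pw mult one r k"
    using idem[OF r] by blast
  have "mult (pw mult one r k) a = mult (pw mult one r k) (mult (mult (pw mult one r k) a) (pw mult one q k))"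
    using an[of k] by simp
  also have "\<dots> = mult (mult (mult (pw mult one r k) (pw mult one r k)) a) (pw mult one q k)"
    using a r pq pw_M by (simp add: assoc closed)
  also have "\<dots> = a" using k(2) an[of k] by simp
  finally have ka: "mult (pw mult one r k) a = a" .
  obtain k' where k': "k = Suc k'" using k(1) by (cases k) auto
  have "mult (mult (pw mult one r k') p) (mult x a) = mult (pw mult one r k) a"
  proof -
    have "mult (pw mult one r k) a = mult (mult (pw mult one r k') (mult p x)) a" using k' r_def by simp
    also have "\<dots> = mult (mult (pw mult one r k') p) (mult x a)"
      using a x pq pw_M[OF r] assoc[of "pw mult one r k'" p x] assoc[of "mult (pw mult one r k') p" x a] closed by simp
    finally show ?thesis by simp
  qed
  moreover have "mult (pw mult one r k') p \<in> M" using pw_M[OF r] pq closed by simp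
  ultimately show ?thesis using ka by (intro bexI[of _ "mult (pw mult one r k') p"]) simp_all
qed

end

locale setting = fmon M mult one zero for M :: "'m set" and mult one zero +
  fixes G :: "'m set" and e :: 'm
  assumes G_M: "G \<subseteq> M" and Ginv: "\<And>g. g \<in> G \<Longrightarrow> \<exists>h\<in>G. mult h g = one"
  and Gcomm: "\<And>g x. g \<in> G \<Longrightarrow> x \<in> M \<Longrightarrow> mult g x = mult x g"
  and e_M: "e \<in> M" and e_idem: "mult e e = e" and e_nz: "e \<noteq> zero"
begin

definition JC where "JC = Jideal M mult e - Iset M mult e"
definition Lset where "Lset = {x \<in> JC. mult x e = x}"
abbreviation GJ' where "GJ' \<equiv> GJ M mult e"
definition Orb where "Orb x = (\<lambda>h. mult x h) ` GJ'"

lemma JC_iff: "x \<in> JC \<longleftrightarrow> x \<in> M \<and> J x = J e"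
proof
  assume "x \<in> JC"
  hence "x \<in> J e" "x \<notin> Iset M mult e" by (auto simp: JC_def)
  thus "x \<in> M \<and> J x = J e" using J_sub[OF e_M] by (auto simp: Iset_def)
next
  assume "x \<in> M \<and> J x = J e"
  thus "x \<in> JC" using J_self[of x] by (auto simp: JC_def Iset_def)
qed

lemma JC_M: "x \<in> JC \<Longrightarrow> x \<in> M" using JC_iff by blast

lemma zero_notin: "zero \<notin> JC"
proof
  assume "zero \<in> JC"
  hence "J zero = J e" using JC_iff by blast
  hence "e \<in> J zero" using J_self[OF e_M] by simp
  then obtain x y where "x \<in> M" "y \<in> M" "e = mult (mult x zero) y" using JE by blast
  hence "e = zero" using rzero lzero zero_M by simp
  thus False using e_nz by simp
qed

lemma ee: assumes x: "x \<in> M" shows "mult e (mult e x) = mult e x"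
proof -
  have "mult (mult e e) x = mult e (mult e x)" by (rule assoc[OF e_M e_M x])
  thus ?thesis using e_idem by simp
qed

lemma Pm: "Pmult M mult zero e x y = (if mult x y \<in> JC then mult x y else zero)"
  by (simp add: Pmult_def JC_def)

lemma Lset_JC: "x \<in> Lset \<Longrightarrow> x \<in> JC" by (simp add: Lset_def)
lemma Lset_M: "x \<in> Lset \<Longrightarrow> x \<in> M" by (simp add: Lset_def JC_M)
lemma Lset_nz: "x \<in> Lset \<Longrightarrow> x \<noteq> zero" using Lset_JC zero_notin by blast

lemma PeE_eq: "PeE M mult zero e = Lset \<union> {zero}"
proof
  show "PeE M mult zero e \<subseteq> Lset \<union> {zero}"
  proof
    fix y assume "y \<in> PeE M mult zero e"
    then obtain z where z: "z \<in> JC \<union> {zero}" "y = Pmult M mult zero e z e"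
      by (auto simp: PeE_def Pset_def JC_def)
    have zM: "z \<in> M" using z(1) JC_M zero_M by blast
    show "y \<in> Lset \<union> {zero}"
    proof (cases "mult z e \<in> JC")
      case True
      have "mult (mult z e) e = mult z e" using assoc[OF zM e_M e_M] e_idem by simp
      thus ?thesis using True z(2) by (simp add: Pm Lset_def)
    qed (simp add: Pm z(2))
  qed
next
  show "Lset \<union> {zero} \<subseteq> PeE M mult zero e"
  proof
    fix x assume x: "x \<in> Lset \<union> {zero}"
    have P: "x \<in> Pset M mult zero e" using x by (auto simp: Pset_def Lset_def JC_def)
    have "Pmult M mult zero e x e = x"
      using x zero_notin lzero e_M by (auto simp: Pm Lset_def)
    hence eqx: "x = Pmult M mult zero e x e" by simp
    show "x \<in> PeE M mult zero e" unfolding PeE_def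
      by (rule image_eqI[where f="\<lambda>x. Pmult M mult zero e x e", OF eqx P])
  qed
qed

lemma GJ_iff: "h \<in> GJ' \<longleftrightarrow> h \<in> JC \<and> mult e h = h \<and> mult h e = h"
proof
  assume "h \<in> GJ'"
  then obtain m where m: "m \<in> M" "h = mult (mult e m) e" "h \<in> Jclass M mult e"
    by (auto simp: GJ_def)
  have hJC: "h \<in> JC" using m(3) JC_iff by (simp add: Jclass_def)
  have kM: "mult e m \<in> M" using m e_M closed by simp
  have "mult e h = mult (mult e (mult e m)) e" using m(2) assoc[OF e_M kM e_M] by simp
  hence "mult e h = h" using ee[OF m(1)] m(2) by simp
  moreover have "mult h e = h" using m(2) assoc[OF kM e_M e_M] e_idem by simp
  ultimately show "h \<in> JC \<and> mult e h = h \<and> mult h e = h" using hJC by simp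
next
  assume h: "h \<in> JC \<and> mult e h = h \<and> mult h e = h"
  hence hM: "h \<in> M" using JC_M by blast
  have "h = mult (mult e h) e" using h by simp
  moreover have "h \<in> Jclass M mult e" using h JC_iff by (simp add: Jclass_def)
  ultimately show "h \<in> GJ'" using hM unfolding GJ_def by blast
qed

lemma GJ_Lset: "h \<in> GJ' \<Longrightarrow> h \<in> Lset" using GJ_iff by (simp add: Lset_def)
lemma GJ_M: "h \<in> GJ' \<Longrightarrow> h \<in> M" using GJ_Lset Lset_M by blast
lemma e_JC: "e \<in> JC" using JC_iff e_M by simp
lemma e_GJ: "e \<in> GJ'" using GJ_iff e_JC e_idem by simp
lemma e_L: "e \<in> Lset" using GJ_Lset e_GJ by simp

lemma Linv: assumes x: "x \<in> Lset" shows "\<exists>u\<in>M. mult u x = e"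
proof -
  have xM: "x \<in> M" and xe: "mult x e = x" and Jx: "J x = J e"
    using Lset_M[OF x] x Lset_JC[OF x] JC_iff[of x] by (simp_all add: Lset_def)
  have "J (mult x e) = J e" using xe Jx by simp
  then obtain u where u: "u \<in> M" "mult u (mult x e) = e" using stab[OF e_M xM] by blast
  show ?thesis using u xe by (intro bexI[of _ u]) simp_all
qed

lemma L_mul: assumes x: "x \<in> Lset" and h: "h \<in> GJ'" shows "mult x h \<in> Lset"
proof -
  have xM: "x \<in> M" and xe: "mult x e = x" and Jx: "J x = J e"
    using Lset_M[OF x] x Lset_JC[OF x] JC_iff[of x] by (simp_all add: Lset_def)
  have hM: "h \<in> M" and he: "mult h e = h" and eh: "mult e h = h" and hL: "h \<in> Lset"
    using GJ_iff[of h] h GJ_M[OF h] GJ_Lset[OF h] by simp_all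
  have xhM: "mult x h \<in> M" using xM hM closed by simp
  obtain u where u: "u \<in> M" "mult u x = e" using Linv[OF x] by blast
  obtain u' where u': "u' \<in> M" "mult u' h = e" using Linv[OF hL] by blast
  have "mult (mult u' u) (mult x h) = e"
  proof -
    have "mult (mult u' u) (mult x h) = mult u' (mult (mult u x) h)"
      using assoc[OF u'(1) u(1) closed[OF xM hM]] assoc[OF u(1) xM hM] by simp
    also have "\<dots> = e" using u u' eh by simp
    finally show ?thesis .
  qed
  hence "e = mult (mult (mult u' u) (mult x h)) one" using rone e_M by simp
  moreover have uuM: "mult u' u \<in> M" using u u' closed by simp
  ultimately have "e \<in> J (mult x h)" using JI[OF uuM one_M] by blast
  hence "J e \<subseteq> J (mult x h)" using J_trans xhM by blast
  moreover have "J (mult x h) \<subseteq> J e" using J_trans[OF xM J_mulR[OF xM hM]] Jx by simp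
  ultimately have "J (mult x h) = J e" by blast
  moreover have "mult (mult x h) e = mult x h" using assoc[OF xM hM e_M] he by simp
  ultimately show ?thesis using xhM JC_iff[of "mult x h"] by (simp add: Lset_def)
qed

lemma GJ_mul: assumes "h1 \<in> GJ'" "h2 \<in> GJ'" shows "mult h1 h2 \<in> GJ'"
proof -
  have "mult h1 h2 \<in> Lset" using L_mul GJ_Lset assms by blast
  moreover have "mult e (mult h1 h2) = mult h1 h2"
    using assms GJ_iff GJ_M assoc[OF e_M, of h1 h2] by simp
  ultimately show ?thesis using GJ_iff by (simp add: Lset_def)
qed

lemma free: assumes x: "x \<in> Lset" and h: "h1 \<in> GJ'" "h2 \<in> GJ'" and eq: "mult x h1 = mult x h2"
  shows "h1 = h2"
proof -
  obtain u where u: "u \<in> M" "mult u x = e" using Linv[OF x] by blast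
  have "mult u (mult x h1) = mult u (mult x h2)" using eq by simp
  hence "mult (mult u x) h1 = mult (mult u x) h2"
    using assoc[of u x h1] assoc[of u x h2] u Lset_M[OF x] GJ_M h by simp
  thus ?thesis using u h GJ_iff by simp
qed

lemma J_G: assumes g: "g \<in> G" and x: "x \<in> M" shows "J (mult g x) = J x"
proof -
  have gM: "g \<in> M" using g G_M by blast
  obtain g' where g': "g' \<in> G" "mult g' g = one" using Ginv[OF g] by blast
  have g'M: "g' \<in> M" using g' G_M by blast
  have gxM: "mult g x \<in> M" using gM x closed by simp
  have "x = mult g' (mult g x)" using assoc[OF g'M gM x] g'(2) lone[OF x] by simp
  hence "x \<in> J (mult g x)" using J_mulL[OF gxM g'M] by simp
  hence "J x \<subseteq> J (mult g x)" using J_trans[OF gxM] by blast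
  moreover have "J (mult g x) \<subseteq> J x" using J_trans[OF x J_mulL[OF x gM]] by simp
  ultimately show ?thesis by blast
qed

lemma G_L: assumes g: "g \<in> G" and x: "x \<in> Lset" shows "mult g x \<in> Lset"
proof -
  have gM: "g \<in> M" using g G_M by blast
  have xM: "x \<in> M" and xe: "mult x e = x" and Jx: "J x = J e"
    using Lset_M[OF x] x Lset_JC[OF x] JC_iff[of x] by (simp_all add: Lset_def)
  have "mult (mult g x) e = mult g x" using assoc[OF gM xM e_M] xe by simp
  moreover have "mult g x \<in> JC" using JC_iff[of "mult g x"] J_G[OF g xM] Jx closed[OF gM xM] by simp
  ultimately show ?thesis by (simp add: Lset_def)
qed

lemma G_GJ: assumes g: "g \<in> G" and h: "h \<in> GJ'" shows "mult g h \<in> GJ'"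
proof -
  have gM: "g \<in> M" using g G_M by blast
  have hM: "h \<in> M" and eh: "mult e h = h" using GJ_iff[of h] h GJ_M[OF h] by simp_all
  have "mult e (mult g h) = mult (mult e g) h" using assoc[OF e_M gM hM] by simp
  also have "\<dots> = mult (mult g e) h" using Gcomm[OF g e_M] by simp
  also have "\<dots> = mult g (mult e h)" using assoc[OF gM e_M hM] by simp
  finally have "mult e (mult g h) = mult g h" using eh by simp
  moreover have "mult g h \<in> Lset" using G_L[OF g GJ_Lset[OF h]] .
  ultimately show ?thesis using GJ_iff[of "mult g h"] by (simp add: Lset_def)
qed

lemma fin_GJ: "finite GJ'" by (rule finite_subset[OF _ fin]) (use GJ_M in blast)
lemma fin_L: "finite Lset" by (rule finite_subset[OF _ fin]) (use Lset_M in blast)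

lemma Orb_sub: "x \<in> Lset \<Longrightarrow> Orb x \<subseteq> Lset" unfolding Orb_def using L_mul by blast
lemma Orb_self: "x \<in> Lset \<Longrightarrow> x \<in> Orb x"
  unfolding Orb_def by (rule image_eqI[OF _ e_GJ]) (simp add: Lset_def)
lemma Orb_card: assumes x: "x \<in> Lset" shows "card (Orb x) = card GJ'"
proof -
  have "inj_on (\<lambda>h. mult x h) GJ'"
  proof (rule inj_onI)
    fix a b assume "a \<in> GJ'" "b \<in> GJ'" "mult x a = mult x b"
    thus "a = b" using free[OF x] by blast
  qed
  thus ?thesis unfolding Orb_def by (rule card_image)
qed

lemma Orb_eq: assumes r: "r \<in> Lset" and y: "y \<in> Orb r" shows "Orb y = Orb r"
proof -
  obtain h where h: "h \<in> GJ'" "y = mult r h" using y by (auto simp: Orb_def)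
  have yL: "y \<in> Lset" using L_mul r h by simp
  have "Orb y \<subseteq> Orb r"
  proof
    fix z assume "z \<in> Orb y"
    then obtain h' where h': "h' \<in> GJ'" "z = mult y h'" by (auto simp: Orb_def)
    have "z = mult r (mult h h')" using h h' assoc[OF Lset_M[OF r] GJ_M GJ_M] by simp
    thus "z \<in> Orb r" using GJ_mul h h' by (auto simp: Orb_def)
  qed
  moreover have "finite (Orb r)" using fin_GJ by (simp add: Orb_def)
  ultimately show ?thesis using card_subset_eq[of "Orb r" "Orb y"] Orb_card[OF r] Orb_card[OF yL] by simp
qed


lemma Pm_zero_l: "y \<in> M \<Longrightarrow> Pmult M mult zero e zero y = zero"
  using lzero zero_notin by (simp add: Pm)
lemma Pm_zero_r: "y \<in> M \<Longrightarrow> Pmult M mult zero e y zero = zero"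
  using rzero zero_notin by (simp add: Pm)
lemma Pm_L: "x \<in> Lset \<Longrightarrow> h \<in> GJ' \<Longrightarrow> Pmult M mult zero e x h = mult x h"
  using L_mul Lset_JC by (simp add: Pm)
lemma Pm_G: "g \<in> G \<Longrightarrow> x \<in> Lset \<Longrightarrow> Pmult M mult zero e g x = mult g x"
  using G_L Lset_JC by (simp add: Pm)

lemma main:
  shows "\<exists>d::nat. d > 0 \<and> (\<exists>\<phi>.
           bij_betw \<phi> (PeE M mult zero e) (Dsum M mult e d) \<and>
           vect_morphism G (PeE M mult zero e) zero (Pmult M mult zero e)
                           (Dsum M mult e d) None (Dsum_act mult) \<phi> \<and>
           vect_morphism G (Dsum M mult e d) None (Dsum_act mult)
                           (PeE M mult zero e) zero (Pmult M mult zero e)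
                           (inv_into (PeE M mult zero e) \<phi>) \<and>
           (\<forall>x\<in>PeE M mult zero e. \<forall>h\<in>hatGJ M mult zero e.
              \<phi> (Pmult M mult zero e x h) = Dsum_ract M mult zero e (\<phi> x) h))"
proof -
  define Os where "Os = Orb ` Lset"
  define d where "d = card Os"
  have finOs: "finite Os" using fin_L Os_def by simp
  have "Os \<noteq> {}" using e_L Os_def by blast
  hence dpos: "d > 0" using finOs d_def by (simp add: card_gt_0_iff)
  obtain f where f: "bij_betw f {0..<d} Os" using ex_bij_betw_nat_finite[OF finOs] d_def by blast
  have injf: "inj_on f {0..<d}" using f by (simp add: bij_betw_def)
  have imf: "f ` {0..<d} = Os" using f by (simp add: bij_betw_def)
  define rep where "rep i = (SOME r. r \<in> Lset \<and> Orb r = f i)" for i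
  define idx where "idx x = inv_into {0..<d} f (Orb x)" for x
  define coord where "coord x = (THE h. h \<in> GJ' \<and> x = mult (rep (idx x)) h)" for x
  define \<phi> where "\<phi> x = (if x = zero then None else Some (coord x, idx x))" for x
  have rep_ok: "rep i \<in> Lset \<and> Orb (rep i) = f i" if "i < d" for i
  proof -
    have "f i \<in> Os" using imf that by auto
    then obtain r where "r \<in> Lset" "Orb r = f i" using Os_def by blast
    hence "\<exists>r. r \<in> Lset \<and> Orb r = f i" by blast
    thus ?thesis unfolding rep_def by (rule someI_ex)
  qed
  have idx_ok: "idx x < d \<and> f (idx x) = Orb x" if "x \<in> Lset" for x
  proof -
    have O: "Orb x \<in> Os" using that Os_def by blast
    have O': "Orb x \<in> f ` {0..<d}" using O imf by simp
    have "idx x \<in> {0..<d}" unfolding idx_def by (rule inv_into_into[OF O'])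
    moreover have "f (idx x) = Orb x" unfolding idx_def by (rule f_inv_into_f[OF O'])
    ultimately show ?thesis by simp
  qed
  have idx_rep: "idx (mult (rep i) h) = i" if "i < d" "h \<in> GJ'" for i h
  proof -
    have r: "rep i \<in> Lset" "Orb (rep i) = f i" using rep_ok that(1) by auto
    have "mult (rep i) h \<in> Orb (rep i)" unfolding Orb_def using that(2) by blast
    hence "Orb (mult (rep i) h) = f i" using Orb_eq r by simp
    hence "idx (mult (rep i) h) = inv_into {0..<d} f (f i)" unfolding idx_def by simp
    also have "\<dots> = i" by (rule inv_into_f_f[OF injf]) (use that(1) in simp)
    finally show ?thesis .
  qed
  have coord_rep: "coord (mult (rep i) h) = h" if "i < d" "h \<in> GJ'" for i h
  proof -
    have r: "rep i \<in> Lset" using rep_ok that(1) by auto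
    show ?thesis unfolding coord_def idx_rep[OF that]
    proof (rule the_equality)
      show "h \<in> GJ' \<and> mult (rep i) h = mult (rep i) h" using that by simp
      fix h' assume "h' \<in> GJ' \<and> mult (rep i) h = mult (rep i) h'"
      thus "h' = h" using free[OF r, of h' h] that(2) by simp
    qed
  qed
  have decomp: "\<exists>h\<in>GJ'. x = mult (rep (idx x)) h" if "x \<in> Lset" for x
  proof -
    have i: "idx x < d" "f (idx x) = Orb x" using idx_ok that by auto
    have "Orb (rep (idx x)) = Orb x" using rep_ok[OF i(1)] i(2) by simp
    hence "x \<in> Orb (rep (idx x))" using Orb_self that by simp
    thus ?thesis by (auto simp: Orb_def)
  qed
  have coord_ok: "coord x \<in> GJ' \<and> x = mult (rep (idx x)) (coord x) \<and> idx x < d" if xL: "x \<in> Lset" for x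
  proof -
    obtain h where h: "h \<in> GJ'" "x = mult (rep (idx x)) h" using decomp[OF xL] by blast
    have i: "idx x < d" using idx_ok xL by auto
    have "coord x = h" using coord_rep[OF i h(1)] h(2) by simp
    thus ?thesis using h i by simp
  qed
  have phiL: "\<phi> x = Some (coord x, idx x)" if "x \<in> Lset" for x
    using that Lset_nz \<phi>_def by simp
  have phi0: "\<phi> zero = None" using \<phi>_def by simp
  have phi_rep: "\<phi> (mult (rep i) h) = Some (h, i)" if "i < d" "h \<in> GJ'" for i h
  proof -
    have "mult (rep i) h \<in> Lset" using L_mul rep_ok that by blast
    thus ?thesis using phiL coord_rep[OF that] idx_rep[OF that] by simp
  qed
  have PE: "PeE M mult zero e = Lset \<union> {zero}" by (rule PeE_eq)
  have Dsum_eq: "Dsum M mult e d = {None} \<union> Some ` (GJ' \<times> {..<d})" by (simp add: Dsum_def)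
  have zP': "zero \<in> PeE M mult zero e" using PE by simp
  have bij: "bij_betw \<phi> (PeE M mult zero e) (Dsum M mult e d)"
    unfolding bij_betw_def
  proof
    show "inj_on \<phi> (PeE M mult zero e)"
    proof (rule inj_onI)
      fix x y assume x: "x \<in> PeE M mult zero e" and y: "y \<in> PeE M mult zero e" and eq: "\<phi> x = \<phi> y"
      show "x = y"
      proof (cases "x = zero")
        case True
        then show ?thesis using eq y PE phiL phi0 by auto
      next
        case False
        hence xL: "x \<in> Lset" using x PE by auto
        have "y \<noteq> zero" using eq phiL[OF xL] phi0 by auto
        hence yL: "y \<in> Lset" using y PE by auto
        have "coord x = coord y" "idx x = idx y" using eq phiL xL yL by auto
        thus ?thesis using coord_ok[OF xL] coord_ok[OF yL] by simp
      qed
    qed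
    show "\<phi> ` PeE M mult zero e = Dsum M mult e d"
    proof
      show "\<phi> ` PeE M mult zero e \<subseteq> Dsum M mult e d"
      proof
        fix w assume "w \<in> \<phi> ` PeE M mult zero e"
        then obtain x where x: "x \<in> Lset \<union> {zero}" "w = \<phi> x" using PE by auto
        show "w \<in> Dsum M mult e d"
        proof (cases "x = zero")
          case True thus ?thesis using x phi0 Dsum_eq by simp
        next
          case False
          hence xL: "x \<in> Lset" using x by auto
          thus ?thesis using x phiL coord_ok Dsum_eq by auto
        qed
      qed
      show "Dsum M mult e d \<subseteq> \<phi> ` PeE M mult zero e"
      proof
        fix w assume w: "w \<in> Dsum M mult e d"
        show "w \<in> \<phi> ` PeE M mult zero e"
        proof (cases w)
          case None thus ?thesis using phi0 zP' by (intro image_eqI[of w \<phi> zero]) simp_all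
        next
          case (Some p)
          then obtain h i where hi: "w = Some (h, i)" "h \<in> GJ'" "i < d" using w Dsum_eq by auto
          have "mult (rep i) h \<in> Lset" using L_mul rep_ok hi by blast
          hence "mult (rep i) h \<in> PeE M mult zero e" using PE by simp
          moreover have "w = \<phi> (mult (rep i) h)" using phi_rep hi by simp
          ultimately show ?thesis by blast
        qed
      qed
    qed
  qed
  have phi_G: "\<phi> (Pmult M mult zero e g v) = Dsum_act mult g (\<phi> v)"
    if g: "g \<in> G" and v: "v \<in> PeE M mult zero e" for g v
  proof (cases "v = zero")
    case True
    have "Pmult M mult zero e g v = zero" using True Pm_zero_r G_M g by blast
    thus ?thesis using True phi0 by (simp add: Dsum_act_def)
  next
    case False
    hence vL: "v \<in> Lset" using v PE by auto
    have c: "coord v \<in> GJ'" "v = mult (rep (idx v)) (coord v)" "idx v < d" using coord_ok vL by auto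
    have gM: "g \<in> M" using g G_M by blast
    have rM: "rep (idx v) \<in> M" using rep_ok c(3) Lset_M by blast
    have cM: "coord v \<in> M" using c(1) GJ_M by blast
    have "mult g v = mult (mult g (rep (idx v))) (coord v)" using c(2) assoc[OF gM rM cM] by simp
    also have "\<dots> = mult (mult (rep (idx v)) g) (coord v)" using Gcomm[OF g rM] by simp
    also have "\<dots> = mult (rep (idx v)) (mult g (coord v))" using assoc[OF rM gM cM] by simp
    finally have gv: "mult g v = mult (rep (idx v)) (mult g (coord v))" .
    have "\<phi> (Pmult M mult zero e g v) = \<phi> (mult (rep (idx v)) (mult g (coord v)))"
      using Pm_G[OF g vL] gv by simp
    also have "\<dots> = Some (mult g (coord v), idx v)" using phi_rep[OF c(3) G_GJ[OF g c(1)]] .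
    also have "\<dots> = Dsum_act mult g (\<phi> v)" using phiL[OF vL] by (simp add: Dsum_act_def)
    finally show ?thesis .
  qed
  have PG: "Pmult M mult zero e g v \<in> PeE M mult zero e" if g: "g \<in> G" and v: "v \<in> PeE M mult zero e" for g v
  proof (cases "v = zero")
    case True
    thus ?thesis using Pm_zero_r G_M g v by auto
  next
    case False
    hence vL: "v \<in> Lset" using v PE by auto
    thus ?thesis using Pm_G[OF g vL] G_L[OF g vL] PE by simp
  qed
  have inj: "inj_on \<phi> (PeE M mult zero e)" using bij by (simp add: bij_betw_def)
  have m1: "vect_morphism G (PeE M mult zero e) zero (Pmult M mult zero e)
                           (Dsum M mult e d) None (Dsum_act mult) \<phi>"
    unfolding vect_morphism_def
  proof (intro conjI ballI impI)
    fix v assume "v \<in> PeE M mult zero e" thus "\<phi> v \<in> Dsum M mult e d" by (rule bij_betw_apply[OF bij])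
  next
    show "\<phi> zero = None" by (rule phi0)
  next
    fix g v assume "g \<in> G" "v \<in> PeE M mult zero e"
    thus "\<phi> (Pmult M mult zero e g v) = Dsum_act mult g (\<phi> v)" by (rule phi_G)
  next
    fix v1 v2 assume "v1 \<in> PeE M mult zero e" "v2 \<in> PeE M mult zero e" "\<phi> v1 = \<phi> v2 \<and> \<phi> v1 \<noteq> None"
    hence "v1 = v2" using inj_onD[OF inj] by blast
    thus "(\<lambda>g. Pmult M mult zero e g v1) ` G = (\<lambda>g. Pmult M mult zero e g v2) ` G" by simp
  qed
  define \<psi> where "\<psi> = inv_into (PeE M mult zero e) \<phi>"
  have bij2: "bij_betw \<psi> (Dsum M mult e d) (PeE M mult zero e)" using bij_betw_inv_into[OF bij] \<psi>_def by simp
  have zP: "zero \<in> PeE M mult zero e" using PE by simp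
  have m2: "vect_morphism G (Dsum M mult e d) None (Dsum_act mult)
                           (PeE M mult zero e) zero (Pmult M mult zero e) \<psi>"
    unfolding vect_morphism_def
  proof (intro conjI ballI impI)
    fix w assume "w \<in> Dsum M mult e d" thus "\<psi> w \<in> PeE M mult zero e" by (rule bij_betw_apply[OF bij2])
  next
    show "\<psi> None = zero" unfolding \<psi>_def using inv_into_f_f[OF inj zP] phi0 by simp
  next
    fix g w assume g: "g \<in> G" and w: "w \<in> Dsum M mult e d"
    have v: "\<psi> w \<in> PeE M mult zero e" by (rule bij_betw_apply[OF bij2 w])
    have wv: "\<phi> (\<psi> w) = w" unfolding \<psi>_def
      by (rule f_inv_into_f) (use bij w in \<open>simp add: bij_betw_def\<close>)
    have "Dsum_act mult g w = \<phi> (Pmult M mult zero e g (\<psi> w))" using phi_G[OF g v] wv by simp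
    hence "\<psi> (Dsum_act mult g w) = \<psi> (\<phi> (Pmult M mult zero e g (\<psi> w)))" by simp
    also have "\<dots> = Pmult M mult zero e g (\<psi> w)"
    proof -
      have "inv_into (PeE M mult zero e) \<phi> (\<phi> (Pmult M mult zero e g (\<psi> w))) = Pmult M mult zero e g (\<psi> w)"
        by (rule inv_into_f_f[OF inj PG[OF g v]])
      thus ?thesis by (simp add: \<psi>_def)
    qed
    finally show "\<psi> (Dsum_act mult g w) = Pmult M mult zero e g (\<psi> w)" .
  next
    fix w1 w2 assume "w1 \<in> Dsum M mult e d" "w2 \<in> Dsum M mult e d" "\<psi> w1 = \<psi> w2 \<and> \<psi> w1 \<noteq> zero"
    hence "w1 = w2" using inj_onD[OF bij_betw_imp_inj_on[OF bij2]] by blast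
    thus "(\<lambda>g. Dsum_act mult g w1) ` G = (\<lambda>g. Dsum_act mult g w2) ` G" by simp
  qed
  have ract: "\<phi> (Pmult M mult zero e x h) = Dsum_ract M mult zero e (\<phi> x) h"
    if x: "x \<in> PeE M mult zero e" and h: "h \<in> hatGJ M mult zero e" for x h
  proof (cases "x = zero")
    case True
    have hM: "h \<in> M" using h GJ_M zero_M by (auto simp: hatGJ_def)
    show ?thesis using True Pm_zero_l[OF hM] phi0 by (simp add: Dsum_ract_def)
  next
    case False
    hence xL: "x \<in> Lset" using x PE by auto
    have c: "coord x \<in> GJ'" "x = mult (rep (idx x)) (coord x)" "idx x < d" using coord_ok xL by auto
    show ?thesis
    proof (cases "h = zero")
      case True
      have "Pmult M mult zero e x h = zero" using True Pm_zero_r Lset_M xL by blast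
      moreover have "Pmult M mult zero e (coord x) h = zero" using True Pm_zero_r GJ_M c(1) by blast
      ultimately show ?thesis using phi0 phiL[OF xL] by (simp add: Dsum_ract_def)
    next
      case False
      hence hG: "h \<in> GJ'" using h by (simp add: hatGJ_def)
      have rM: "rep (idx x) \<in> M" using rep_ok c(3) Lset_M by blast
      have "mult x h = mult (rep (idx x)) (mult (coord x) h)"
        using c(2) assoc[OF rM GJ_M[OF c(1)] GJ_M[OF hG]] by simp
      hence "\<phi> (Pmult M mult zero e x h) = Some (mult (coord x) h, idx x)"
        using Pm_L[OF xL hG] phi_rep[OF c(3) GJ_mul[OF c(1) hG]] by simp
      moreover have "Pmult M mult zero e (coord x) h = mult (coord x) h"
        using Pm_L[OF GJ_Lset[OF c(1)] hG] .
      moreover have "mult (coord x) h \<noteq> zero" using GJ_mul[OF c(1) hG] GJ_Lset Lset_nz by blast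
      ultimately show ?thesis using phiL[OF xL] by (simp add: Dsum_ract_def Let_def)
    qed
  qed
  have m2': "vect_morphism G (Dsum M mult e d) None (Dsum_act mult)
                           (PeE M mult zero e) zero (Pmult M mult zero e) (inv_into (PeE M mult zero e) \<phi>)"
    using m2 by (simp add: \<psi>_def)
  have ract': "\<forall>x\<in>PeE M mult zero e. \<forall>h\<in>hatGJ M mult zero e.
              \<phi> (Pmult M mult zero e x h) = Dsum_ract M mult zero e (\<phi> x) h" using ract by blast
  show ?thesis
    by (intro exI[of _ d] conjI dpos exI[of _ \<phi>] bij m1 m2' ract')
qed

end

theorem mainTheorem8:
  fixes M G :: "'m set" and mult :: "'m \<Rightarrow> 'm \<Rightarrow> 'm" and one zero e :: 'm
  assumes "hat_linear_monoid M mult one zero G"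
    and "finite G"
    and "\<forall>g\<in>G. \<forall>h\<in>G. mult g h = mult h g"
    and "left_inductive M mult one zero G"
    and "e \<in> M" and "mult e e = e" and "e \<noteq> zero"
  shows "\<exists>d::nat. d > 0 \<and> (\<exists>\<phi>.
           bij_betw \<phi> (PeE M mult zero e) (Dsum M mult e d) \<and>
           vect_morphism G (PeE M mult zero e) zero (Pmult M mult zero e)
                           (Dsum M mult e d) None (Dsum_act mult) \<phi> \<and>
           vect_morphism G (Dsum M mult e d) None (Dsum_act mult)
                           (PeE M mult zero e) zero (Pmult M mult zero e)
                           (inv_into (PeE M mult zero e) \<phi>) \<and>
           (\<forall>x\<in>PeE M mult zero e. \<forall>h\<in>hatGJ M mult zero e.
              \<phi> (Pmult M mult zero e x h) = Dsum_ract M mult zero e (\<phi> x) h))"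
proof -
  note H0 = assms(1)[unfolded hat_linear_monoid_def]
  have H1: "finite M" using H0 by (elim conjE)
  have H2: "one \<in> M" using H0 by (elim conjE)
  have H3: "zero \<in> M" using H0 by (elim conjE)
  have H4: "\<forall>x\<in>M. \<forall>y\<in>M. mult x y \<in> M" using H0 by (elim conjE)
  have H5: "\<forall>x\<in>M. \<forall>y\<in>M. \<forall>z\<in>M. mult (mult x y) z = mult x (mult y z)" using H0 by (elim conjE)
  have H6: "\<forall>x\<in>M. mult one x = x \<and> mult x one = x" using H0 by (elim conjE)
  have H7: "\<forall>x\<in>M. mult zero x = zero \<and> mult x zero = zero" using H0 by (elim conjE)
  have H8: "G \<subseteq> M" using H0 by (elim conjE)
  have H9: "\<forall>g\<in>G. \<exists>h\<in>G. mult g h = one \<and> mult h g = one" using H0 by (elim conjE)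
  have H10: "\<forall>g\<in>G. \<forall>x\<in>M. mult g x = mult x g" using H0 by (elim conjE)
  note H = H1 H2 H3 H4 H5 H6 H7 H8 H9 H10
  have S: "setting M mult one zero G e"
  proof (unfold_locales)
    show "finite M" by (rule H(1))
    show "one \<in> M" by (rule H(2))
    show "zero \<in> M" by (rule H(3))
    show "\<And>x y. x \<in> M \<Longrightarrow> y \<in> M \<Longrightarrow> mult x y \<in> M" using H(4) by blast
    show "\<And>x y z. x \<in> M \<Longrightarrow> y \<in> M \<Longrightarrow> z \<in> M \<Longrightarrow> mult (mult x y) z = mult x (mult y z)"
      using H(5) by blast
    show "\<And>x. x \<in> M \<Longrightarrow> mult one x = x" using H(6) by blast
    show "\<And>x. x \<in> M \<Longrightarrow> mult x one = x" using H(6) by blast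
    show "\<And>x. x \<in> M \<Longrightarrow> mult zero x = zero" using H(7) by blast
    show "\<And>x. x \<in> M \<Longrightarrow> mult x zero = zero" using H(7) by blast
    show "G \<subseteq> M" by (rule H(8))
    show "\<And>g. g \<in> G \<Longrightarrow> \<exists>h\<in>G. mult h g = one" using H(9) by blast
    show "\<And>g x. g \<in> G \<Longrightarrow> x \<in> M \<Longrightarrow> mult g x = mult x g" using H(10) by blast
    show "e \<in> M" by (rule assms(5))
    show "mult e e = e" by (rule assms(6))
    show "e \<noteq> zero" by (rule assms(7))
  qed
  interpret setting M mult one zero G e by (rule S)
  show ?thesis by (rule main)
qed

end
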